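(* Let $E$ be an ellipse with center $O$ and $\psi$ the elliptic inversion with respect to $E$. Let $P,T$ be distinct points different from $O$, let $P'=\psi(P)$, $T'=\psi(T)$, and let $w=w_P$, $u=w_T$. Then: (i) if $P,T,O$ are not collinear, $$P'T'=\frac{\sqrt{(w^2-u^2)\left(w^2(OT)^2-u^2(OP)^2\right)+w^2u^2(PT)^2}}{OP\cdot OT};$$ (ii) if $P,T,O$ are collinear, then $w=u$ and $$P'T'=\frac{w^2\,PT}{OP\cdot OT}.$$
   Context: Let $E$ be an ellipse in $\mathbb{R}^2$ with center $O$. For a point $P\neq O$, let $Q_P$ be the intersection point of the ray $\overrightarrow{OP}$ with $E$ and write $w_P=OQ_P$. The elliptic inversion is the map $\psi:\mathbb{R}^2\setminus\{O\}\to\mathbb{R}^2\setminus\{O\}$, $\psi(P)=P'$, where $P'$ is the unique point on the ray $\overrightarrow{OP}$ with $OP\cdot OP'=w_P^2$. $XY$ denotes the Euclidean distance between points $X$ and $Y$. *)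

theory Defs
  imports "HOL-Analysis.Analysis"
begin

definition ellipse :: "real^2 \<Rightarrow> real^2 \<Rightarrow> real^2 \<Rightarrow> real \<Rightarrow> real \<Rightarrow> (real^2) set" where
  "ellipse C e1 e2 a b =
     {X. ((X - C) \<bullet> e1)^2 / a^2 + ((X - C) \<bullet> e2)^2 / b^2 = 1}"

definition is_ellipse :: "(real^2) set \<Rightarrow> real^2 \<Rightarrow> bool" where
  "is_ellipse E C \<longleftrightarrow> (\<exists>e1 e2 a b. norm e1 = 1 \<and> norm e2 = 1 \<and> e1 \<bullet> e2 = 0
      \<and> a > 0 \<and> b > 0 \<and> E = ellipse C e1 e2 a b)"

definition ray :: "real^2 \<Rightarrow> real^2 \<Rightarrow> (real^2) set" where
  "ray C P = {C + t *\<^sub>R (P - C) | t. t > 0}"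

definition ray_pt :: "(real^2) set \<Rightarrow> real^2 \<Rightarrow> real^2 \<Rightarrow> real^2" where
  "ray_pt E C P = (THE Q. Q \<in> E \<and> Q \<in> ray C P)"

definition wlen :: "(real^2) set \<Rightarrow> real^2 \<Rightarrow> real^2 \<Rightarrow> real" where
  "wlen E C P = dist C (ray_pt E C P)"

definition ell_inv :: "(real^2) set \<Rightarrow> real^2 \<Rightarrow> real^2 \<Rightarrow> real^2" where
  "ell_inv E C P = (THE P'. P' \<in> ray C P \<and> dist C P * dist C P' = (wlen E C P)^2)"

end

theory Submission
  imports Defs
begin

lemma qq_pos:
  fixes p e1 e2 :: "real^2"
  assumes "norm e1 = 1" "norm e2 = 1" "e1 \<bullet> e2 = 0" "p \<noteq> 0" "a > 0" "b > 0"
  shows "(p \<bullet> e1)^2 / a^2 + (p \<bullet> e2)^2 / b^2 > 0"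
proof -
  have n1: "e1 \<bullet> e1 = 1" using assms(1) by (simp add: dot_square_norm)
  have n2: "e2 \<bullet> e2 = 1" using assms(2) by (simp add: dot_square_norm)
  have "p \<bullet> e1 \<noteq> 0 \<or> p \<bullet> e2 \<noteq> 0"
  proof (rule ccontr)
    assume "\<not> ?thesis"
    hence z1: "p$1*e1$1 + p$2*e1$2 = 0" and z2: "p$1*e2$1 + p$2*e2$2 = 0"
      by (auto simp: inner_vec_def sum_2)
    have o1: "e1$1*e1$1 + e1$2*e1$2 = 1" using n1 by (simp add: inner_vec_def sum_2)
    have o2: "e2$1*e2$1 + e2$2*e2$2 = 1" using n2 by (simp add: inner_vec_def sum_2)
    have o3: "e1$1*e2$1 + e1$2*e2$2 = 0" using assms(3) by (simp add: inner_vec_def sum_2)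
    define d where "d = e1$1*e2$2 - e1$2*e2$1"
    have dd: "d*d = (e1$1*e1$1 + e1$2*e1$2)*(e2$1*e2$1 + e2$2*e2$2) - (e1$1*e2$1 + e1$2*e2$2)^2"
      unfolding d_def by (simp add: algebra_simps power2_eq_square)
    hence "d*d = 1" using o1 o2 o3 by simp
    have "p$1 * d = (p$1*e1$1 + p$2*e1$2)*e2$2 - (p$1*e2$1 + p$2*e2$2)*e1$2"
      unfolding d_def by (simp add: algebra_simps)
    hence a1: "p$1 * d = 0" using z1 z2 by simp
    have "p$2 * d = (p$1*e2$1 + p$2*e2$2)*e1$1 - (p$1*e1$1 + p$2*e1$2)*e2$1"
      unfolding d_def by (simp add: algebra_simps)
    hence a2: "p$2 * d = 0" using z1 z2 by simp
    have "d \<noteq> 0" using \<open>d*d = 1\<close> by auto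
    hence "p$1 = 0" "p$2 = 0" using a1 a2 by auto
    hence "p = 0" by (simp add: vec_eq_iff forall_2)
    thus False using assms(4) by simp
  qed
  thus ?thesis using assms(5,6) by (auto intro: add_pos_nonneg add_nonneg_pos)
qed

lemma key:
  fixes C P e1 e2 :: "real^2"
  assumes "norm e1 = 1" "norm e2 = 1" "e1 \<bullet> e2 = 0" "a > 0" "b > 0"
    and E: "E = ellipse C e1 e2 a b" and "P \<noteq> C"
  defines "q \<equiv> ((P - C) \<bullet> e1)^2 / a^2 + ((P - C) \<bullet> e2)^2 / b^2"
  shows "q > 0" "wlen E C P = norm (P - C) / sqrt q"
    "ell_inv E C P = C + ((wlen E C P)^2 / (norm (P - C))^2) *\<^sub>R (P - C)"
proof -
  show qp: "q > 0" unfolding q_def using qq_pos assms by simp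
  have rp: "ray_pt E C P = C + (1 / sqrt q) *\<^sub>R (P - C)"
    unfolding ray_pt_def
  proof (rule the_equality)
    define t where "t = 1 / sqrt q"
    have "((C + t *\<^sub>R (P - C) - C) \<bullet> e1)^2 / a^2 + ((C + t *\<^sub>R (P - C) - C) \<bullet> e2)^2 / b^2 = t^2 * q"
      unfolding q_def by (simp add: power_mult_distrib distrib_left del: inner_diff_left)
    also have "\<dots> = 1" using qp unfolding t_def by (simp add: power_divide)
    finally have e: "C + t *\<^sub>R (P - C) \<in> E" unfolding E ellipse_def by simp
    have "C + t *\<^sub>R (P - C) \<in> ray C P" using qp unfolding ray_def t_def by auto
    with e show "C + (1 / sqrt q) *\<^sub>R (P - C) \<in> E \<and> C + (1 / sqrt q) *\<^sub>R (P - C) \<in> ray C P"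
      unfolding t_def by simp
  next
    fix Q assume "Q \<in> E \<and> Q \<in> ray C P"
    then obtain t where t: "t > 0" "Q = C + t *\<^sub>R (P - C)"
      and h: "((Q - C) \<bullet> e1)^2 / a^2 + ((Q - C) \<bullet> e2)^2 / b^2 = 1"
      unfolding E ellipse_def ray_def by auto
    have "((Q - C) \<bullet> e1)^2 / a^2 + ((Q - C) \<bullet> e2)^2 / b^2 = t^2 * q"
      unfolding q_def t(2) by (simp add: power_mult_distrib distrib_left del: inner_diff_left)
    hence "t^2 * q = 1" using h by simp
    hence "t^2 = (1 / sqrt q)^2" using qp by (simp add: power_divide field_simps)
    hence "t = 1 / sqrt q" using t(1) qp
      by (metis less_eq_real_def power2_eq_imp_eq real_sqrt_gt_zero zero_le_divide_1_iff)
    thus "Q = C + (1 / sqrt q) *\<^sub>R (P - C)" using t by simp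
  qed
  show w: "wlen E C P = norm (P - C) / sqrt q"
    unfolding wlen_def rp dist_norm using qp by simp
  have np: "norm (P - C) > 0" using assms(7) by simp
  show "ell_inv E C P = C + ((wlen E C P)^2 / (norm (P - C))^2) *\<^sub>R (P - C)"
    unfolding ell_inv_def
  proof (rule the_equality)
    have "(wlen E C P)^2 / (norm (P - C))^2 > 0" using w np qp by simp
    thus "C + ((wlen E C P)^2 / (norm (P - C))^2) *\<^sub>R (P - C) \<in> ray C P \<and>
      dist C P * dist C (C + ((wlen E C P)^2 / (norm (P - C))^2) *\<^sub>R (P - C)) = (wlen E C P)^2"
      unfolding ray_def dist_norm using np
      by (auto simp: norm_minus_commute power2_eq_square)
  next
    fix Q assume "Q \<in> ray C P \<and> dist C P * dist C Q = (wlen E C P)^2"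
    then obtain t where t: "t > 0" "Q = C + t *\<^sub>R (P - C)"
      and h: "dist C P * dist C Q = (wlen E C P)^2" unfolding ray_def by auto
    have "dist C P * dist C Q = t * (norm (P - C))^2"
      unfolding t(2) dist_norm using t(1) by (simp add: norm_minus_commute power2_eq_square)
    hence "t = (wlen E C P)^2 / (norm (P - C))^2" using h np by (simp add: field_simps)
    thus "Q = C + ((wlen E C P)^2 / (norm (P - C))^2) *\<^sub>R (P - C)" using t by simp
  qed
qed

lemma inv_dist:
  fixes p t :: "real^2" and w u :: real
  assumes "p \<noteq> 0" "t \<noteq> 0"
  shows "norm ((w^2 / (norm p)^2) *\<^sub>R p - (u^2 / (norm t)^2) *\<^sub>R t) =
    sqrt ((w^2 - u^2) * (w^2 * (norm t)^2 - u^2 * (norm p)^2) + w^2 * u^2 * (norm (p - t))^2)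
      / (norm p * norm t)"
proof -
  define L where "L = norm ((w^2 / (norm p)^2) *\<^sub>R p - (u^2 / (norm t)^2) *\<^sub>R t)"
  have np: "norm p > 0" and nt: "norm t > 0" using assms by auto
  have pp: "p \<bullet> p = (norm p)^2" and tt: "t \<bullet> t = (norm t)^2" by (simp_all add: power2_norm_eq_inner)
  have L2: "L^2 = (w^2 / (norm p)^2)^2 * (norm p)^2 + (u^2 / (norm t)^2)^2 * (norm t)^2
       - 2 * (w^2 / (norm p)^2) * (u^2 / (norm t)^2) * (p \<bullet> t)"
    unfolding L_def power2_norm_eq_inner
    by (simp add: inner_diff_left inner_diff_right pp tt inner_commute power2_eq_square algebra_simps)
  have D: "(norm (p - t))^2 = (norm p)^2 + (norm t)^2 - 2 * (p \<bullet> t)"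
    unfolding power2_norm_eq_inner by (simp add: inner_diff_left inner_diff_right inner_commute)
  have "(L * (norm p * norm t))^2 = L^2 * ((norm p)^2 * (norm t)^2)" by (simp add: power_mult_distrib)
  also have "\<dots> = (w^2 - u^2) * (w^2 * (norm t)^2 - u^2 * (norm p)^2) + w^2 * u^2 * (norm (p - t))^2"
    unfolding L2 D using np nt by (simp add: field_simps power2_eq_square)
  finally have "L * (norm p * norm t) = sqrt ((w^2 - u^2) * (w^2 * (norm t)^2 - u^2 * (norm p)^2) + w^2 * u^2 * (norm (p - t))^2)"
    using np nt by (metis L_def mult_nonneg_nonneg norm_ge_zero real_sqrt_abs abs_of_nonneg)
  thus ?thesis using np nt unfolding L_def by (simp add: field_simps)
qed

theorem theorem1:
  fixes E :: "(real^2) set" and C P T :: "real^2"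
  assumes "is_ellipse E C"
    and "P \<noteq> C" and "T \<noteq> C" and "P \<noteq> T"
  shows "(\<not> collinear {P, T, C} \<longrightarrow>
            dist (ell_inv E C P) (ell_inv E C T) =
              sqrt (((wlen E C P)^2 - (wlen E C T)^2)
                      * ((wlen E C P)^2 * (dist C T)^2 - (wlen E C T)^2 * (dist C P)^2)
                    + (wlen E C P)^2 * (wlen E C T)^2 * (dist P T)^2)
              / (dist C P * dist C T))
       \<and> (collinear {P, T, C} \<longrightarrow>
            wlen E C P = wlen E C T \<and>
            dist (ell_inv E C P) (ell_inv E C T) =
              (wlen E C P)^2 * dist P T / (dist C P * dist C T))"
proof -
  obtain e1 e2 a b where ax: "norm e1 = 1" "norm e2 = 1" "e1 \<bullet> e2 = 0" "a > 0" "b > 0"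
    and E: "E = ellipse C e1 e2 a b" using assms(1) unfolding is_ellipse_def by blast
  note kP = key[OF ax E assms(2)]
  note kT = key[OF ax E assms(3)]
  define w where "w = wlen E C P"
  define u where "u = wlen E C T"
  have p0: "P - C \<noteq> 0" and t0: "T - C \<noteq> 0" using assms by auto
  have dd: "dist (ell_inv E C P) (ell_inv E C T) =
    norm ((w^2 / (norm (P - C))^2) *\<^sub>R (P - C) - (u^2 / (norm (T - C))^2) *\<^sub>R (T - C))"
    unfolding kP(3) kT(3) w_def u_def dist_norm by simp
  have GEN: "dist (ell_inv E C P) (ell_inv E C T) =
              sqrt ((w^2 - u^2) * (w^2 * (dist C T)^2 - u^2 * (dist C P)^2)
                    + w^2 * u^2 * (dist P T)^2) / (dist C P * dist C T)"
    unfolding dd inv_dist[OF p0 t0] by (simp add: dist_norm norm_minus_commute)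
  have COL: "w = u" if c: "collinear {P, T, C}"
  proof -
    have "{P, T, C} = {P, C, T}" by auto
    hence "collinear {P, C, T}" using c by simp
    hence "collinear {0, P - C, T - C}" by (subst (asm) collinear_3) simp
    then obtain k where k: "T - C = k *\<^sub>R (P - C)" using p0 t0 by (auto simp: collinear_lemma)
    have "k \<noteq> 0" using k t0 by auto
    have qT: "((T - C) \<bullet> e1)^2 / a^2 + ((T - C) \<bullet> e2)^2 / b^2
        = k^2 * (((P - C) \<bullet> e1)^2 / a^2 + ((P - C) \<bullet> e2)^2 / b^2)"
      unfolding k by (simp add: power_mult_distrib distrib_left del: inner_diff_left)
    define q where "q = ((P - C) \<bullet> e1)^2 / a^2 + ((P - C) \<bullet> e2)^2 / b^2"
    have q0: "q > 0" using kP(1) q_def by simp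
    have "u = norm (k *\<^sub>R (P - C)) / sqrt (k^2 * q)" unfolding u_def kT(2) qT unfolding k q_def ..
    also have "\<dots> = (\<bar>k\<bar> * norm (P - C)) / (\<bar>k\<bar> * sqrt q)" by (simp add: real_sqrt_mult)
    also have "\<dots> = norm (P - C) / sqrt q" using \<open>k \<noteq> 0\<close> by simp
    finally show ?thesis unfolding w_def kP(2) q_def by simp
  qed
  show ?thesis
  proof (intro conjI impI)
    assume "\<not> collinear {P, T, C}"
    thus "dist (ell_inv E C P) (ell_inv E C T) =
              sqrt (((wlen E C P)^2 - (wlen E C T)^2)
                      * ((wlen E C P)^2 * (dist C T)^2 - (wlen E C T)^2 * (dist C P)^2)
                    + (wlen E C P)^2 * (wlen E C T)^2 * (dist P T)^2)
              / (dist C P * dist C T)" using GEN unfolding w_def u_def by simp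
  next
    assume c: "collinear {P, T, C}"
    thus "wlen E C P = wlen E C T" using COL unfolding w_def u_def by simp
    have wu: "w = u" using COL c by simp
    have "sqrt ((w^2 - u^2) * (w^2 * (dist C T)^2 - u^2 * (dist C P)^2)
                    + w^2 * u^2 * (dist P T)^2) = w^2 * dist P T"
    proof -
      have "(w^2 - u^2) * (w^2 * (dist C T)^2 - u^2 * (dist C P)^2) + w^2 * u^2 * (dist P T)^2
          = (w^2 * dist P T)^2" unfolding wu by (simp add: power2_eq_square)
      thus ?thesis by simp
    qed
    thus "dist (ell_inv E C P) (ell_inv E C T) = (wlen E C P)^2 * dist P T / (dist C P * dist C T)"
      using GEN unfolding w_def by simp
  qed
qed

end
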